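(* Let $(R,pR)$ be a discrete valuation domain with valuation $\mathsf{v}$ and finite residue field, $f\in R[x]$ non-constant and primitive with irreducible divisor set $\mathcal{P}$, and $n:=\mathsf{v}(\operatorname{d}(f))\ge 1$. Let $W\subseteq\mathcal{W}(f)$ be a set of representatives of $\mathcal{W}(f)$ modulo $p^{\lceil n/2\rceil}R$ (i.e. $W$ contains exactly one element of each residue class modulo $p^{\lceil n/2\rceil}R$ that meets $\mathcal{W}(f)$). Then for every $a\in\mathcal{W}(f)$ there exists $w\in W$ with $\mathsf{v}_{\mathcal{P}}(a)=\mathsf{v}_{\mathcal{P}}(w)$. In particular, the matrix in $\mathbb{Q}^{W\times\mathcal{P}}$ whose row indexed by $w$ is $\mathsf{v}_{\mathcal{P}}(w)$ has kernel equal to $\operatorname{fdk}(f)$.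
   Context: $\operatorname{d}(f)=\gcd(f(a)\mid a\in R)$, so $\mathsf{v}(\operatorname{d}(f))=\min_{a\in R}\mathsf{v}(f(a))$. Primitive means the coefficients generate $R$. An irreducible divisor set $\mathcal{P}$ of $f$ is a set of representatives of the associate classes of irreducible divisors of $f$ in $R[x]$. For $a\in R$, $\mathsf{v}_{\mathcal{P}}(a)=(\mathsf{v}(g(a)))_{g\in\mathcal{P}}$. $\mathcal{W}(f)=\{a\in R\mid \mathsf{v}(f(a))=\mathsf{v}(\operatorname{d}(f))\}$, and $\operatorname{fdk}(f)=\{(u_g)_{g\in\mathcal{P}}\in\mathbb{Q}^{\mathcal{P}}\mid \forall a\in\mathcal{W}(f):\sum_{g}u_g\,\mathsf{v}(g(a))=0\}$. *)

theory Defs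
  imports "HOL-Computational_Algebra.Polynomial"
begin

text \<open>(R, pR) is a discrete valuation domain with uniformizer p: p is a nonzero nonunit and
 every nonzero element is a unit times a power of p. The valuation is v = pval p.\<close>
definition dvd_uniformizer :: "'a::idom \<Rightarrow> bool" where
  "dvd_uniformizer p \<longleftrightarrow> p \<noteq> 0 \<and> \<not> p dvd 1 \<and>
     (\<forall>x. x \<noteq> 0 \<longrightarrow> (\<exists>u k. u dvd 1 \<and> x = u * p ^ k))"

definition pval :: "'a::idom \<Rightarrow> 'a \<Rightarrow> nat" where
  "pval p x = (if finite {n. p ^ n dvd x} then Max {n. p ^ n dvd x} else 0)"

definition finite_residue_field :: "'a::idom \<Rightarrow> bool" where
  "finite_residue_field p \<longleftrightarrow> finite ((\<lambda>x. {y. p dvd (x - y)}) ` UNIV)"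

text \<open>Primitive: the coefficients generate the unit ideal.\<close>
definition primitive_poly :: "'a::idom poly \<Rightarrow> bool" where
  "primitive_poly f \<longleftrightarrow> (\<exists>c. (\<Sum>i\<le>degree f. c i * coeff f i) = 1)"

text \<open>Irreducible divisor set: representatives of associate classes of irreducible divisors.\<close>
definition irred_divisor_set :: "'a::idom poly \<Rightarrow> 'a poly set \<Rightarrow> bool" where
  "irred_divisor_set f P \<longleftrightarrow>
     (\<forall>g\<in>P. irreducible g \<and> g dvd f) \<and>
     (\<forall>g. irreducible g \<and> g dvd f \<longrightarrow> (\<exists>h\<in>P. g dvd h \<and> h dvd g)) \<and>
     (\<forall>g\<in>P. \<forall>h\<in>P. g dvd h \<and> h dvd g \<longrightarrow> g = h)"

text \<open>v(d(f)) = min over a of v(f(a)), where v(0) = infinity (so zero values are ignored).\<close>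
definition vd :: "'a::idom \<Rightarrow> 'a poly \<Rightarrow> nat" where
  "vd p f = (LEAST k. \<exists>a. poly f a \<noteq> 0 \<and> pval p (poly f a) = k)"

definition Wset :: "'a::idom \<Rightarrow> 'a poly \<Rightarrow> 'a set" where
  "Wset p f = {a. poly f a \<noteq> 0 \<and> pval p (poly f a) = vd p f}"

text \<open>Vectors in Q^P are modelled as functions vanishing outside P.\<close>
definition fdk :: "'a::idom \<Rightarrow> 'a poly \<Rightarrow> 'a poly set \<Rightarrow> ('a poly \<Rightarrow> rat) set" where
  "fdk p f P = {u. (\<forall>g. g \<notin> P \<longrightarrow> u g = 0) \<and>
     (\<forall>a\<in>Wset p f. (\<Sum>g\<in>P. u g * of_nat (pval p (poly g a))) = 0)}"

end

theory Submission
  imports Defs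
begin

lemma poly_diff_dvd:
  fixes g :: "'a::comm_ring_1 poly"
  shows "(a - w) dvd (poly g a - poly g w)"
proof -
  have "poly (g - [:poly g w:]) w = 0" by simp
  then have "[:- w, 1:] dvd (g - [:poly g w:])" using poly_eq_0_iff_dvd by blast
  then obtain q where q: "g - [:poly g w:] = [:- w, 1:] * q" by (auto elim: dvdE)
  have "poly (g - [:poly g w:]) a = (a - w) * poly q a"
    by (simp add: q algebra_simps)
  then show ?thesis by simp
qed

lemma dvd_unit_pow_iff:
  fixes p :: "'a::idom"
  assumes U: "dvd_uniformizer p" and u: "u dvd 1"
  shows "p ^ n dvd u * p ^ k \<longleftrightarrow> n \<le> k"
proof
  have p0: "p \<noteq> 0" and np: "\<not> p dvd 1" using U by (auto simp: dvd_uniformizer_def)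
  assume d: "p ^ n dvd u * p ^ k"
  show "n \<le> k"
  proof (rule ccontr)
    assume "\<not> n \<le> k"
    then have "n = (n - k) + k" "n - k \<ge> 1" by auto
    then have "p ^ (n - k) * p ^ k dvd u * p ^ k" using d by (metis power_add)
    then have "p ^ (n - k) dvd u" using p0 by simp
    moreover have "p dvd p ^ (n - k)" using \<open>n - k \<ge> 1\<close>
      by (cases "n - k") auto
    ultimately have "p dvd 1" using u by (meson dvd_trans)
    with np show False by simp
  qed
next
  assume "n \<le> k"
  then have "p ^ n dvd p ^ k" by (simp add: le_imp_power_dvd)
  then show "p ^ n dvd u * p ^ k" by simp
qed

lemma pval_unit_pow:
  fixes p :: "'a::idom"
  assumes U: "dvd_uniformizer p" and u: "u dvd 1"
  shows "pval p (u * p ^ k) = k"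
proof -
  have S: "{n. p ^ n dvd u * p ^ k} = {..k}"
    using dvd_unit_pow_iff[OF U u] by auto
  have "Max {..k} = k" by (rule Max_eqI) auto
  then show ?thesis unfolding pval_def S by simp
qed

lemma pval_rep:
  fixes p :: "'a::idom"
  assumes U: "dvd_uniformizer p" and x: "x \<noteq> 0"
  obtains u where "u dvd 1" "x = u * p ^ pval p x"
proof -
  obtain u k where "u dvd 1" "x = u * p ^ k" using U x by (auto simp: dvd_uniformizer_def)
  moreover then have "pval p x = k" using pval_unit_pow[OF U] by simp
  ultimately show ?thesis using that by simp
qed

lemma pval_dvd_iff:
  fixes p :: "'a::idom"
  assumes U: "dvd_uniformizer p" and x: "x \<noteq> 0"
  shows "p ^ n dvd x \<longleftrightarrow> n \<le> pval p x"
proof -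
  obtain u where u: "u dvd 1" "x = u * p ^ pval p x" using pval_rep[OF U x] by blast
  show ?thesis using dvd_unit_pow_iff[OF U u(1)] u(2) by metis
qed

lemma pval_mult:
  fixes p :: "'a::idom"
  assumes U: "dvd_uniformizer p" and x: "x \<noteq> 0" and y: "y \<noteq> 0"
  shows "pval p (x * y) = pval p x + pval p y"
proof -
  obtain u where u: "u dvd 1" "x = u * p ^ pval p x" using pval_rep[OF U x] by blast
  obtain v where v: "v dvd 1" "y = v * p ^ pval p y" using pval_rep[OF U y] by blast
  have "x * y = (u * v) * p ^ (pval p x + pval p y)"
    by (subst u(2), subst v(2)) (simp add: power_add algebra_simps)
  moreover have "u * v dvd 1" using mult_dvd_mono[OF u(1) v(1)] by simp
  ultimately show ?thesis using pval_unit_pow[OF U] by metis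
qed

lemma pval_close:
  fixes p :: "'a::idom"
  assumes U: "dvd_uniformizer p" and x: "x \<noteq> 0" and y: "y \<noteq> 0"
    and d: "p ^ s dvd (x - y)" and ne: "pval p x \<noteq> pval p y"
  shows "s \<le> pval p x"
proof (rule ccontr)
  assume "\<not> s \<le> pval p x"
  then have lt: "pval p x < s" by simp
  have ds: "\<And>m. m \<le> s \<Longrightarrow> p ^ m dvd (x - y)"
    using d le_imp_power_dvd dvd_trans by blast
  have "p ^ pval p x dvd x" using pval_dvd_iff[OF U x] by simp
  moreover have "p ^ pval p x dvd (x - y)" using ds lt by simp
  ultimately have "p ^ pval p x dvd x - (x - y)" by (rule dvd_diff)
  then have "p ^ pval p x dvd y" by simp
  then have "pval p x \<le> pval p y" using pval_dvd_iff[OF U y] by simp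
  with ne have "Suc (pval p x) \<le> pval p y" by simp
  then have "p ^ Suc (pval p x) dvd y" using pval_dvd_iff[OF U y, of "Suc (pval p x)"] by blast
  moreover have "p ^ Suc (pval p x) dvd (x - y)" using ds[of "Suc (pval p x)"] lt by linarith
  ultimately have "p ^ Suc (pval p x) dvd y + (x - y)" by (rule dvd_add)
  then have "p ^ Suc (pval p x) dvd x" by simp
  then show False using pval_dvd_iff[OF U x, of "Suc (pval p x)"] by simp
qed

lemma same_val:
  fixes p :: "'a::idom"
  assumes U: "dvd_uniformizer p" and g: "g dvd f"
    and a: "poly f a \<noteq> 0" and w: "poly f w \<noteq> 0"
    and fa: "pval p (poly f a) = n" and fw: "pval p (poly f w) = n"
    and d: "p ^ m dvd (a - w)" and mn: "n \<le> 2 * m"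
  shows "pval p (poly g a) = pval p (poly g w)"
proof (rule ccontr)
  assume ne: "pval p (poly g a) \<noteq> pval p (poly g w)"
  obtain q where q: "f = g * q" using g by (auto elim: dvdE)
  have ga: "poly g a \<noteq> 0" "poly q a \<noteq> 0" using a q by auto
  have gw: "poly g w \<noteq> 0" "poly q w \<noteq> 0" using w q by auto
  have ea: "n = pval p (poly g a) + pval p (poly q a)"
    using fa q pval_mult[OF U ga] by simp
  have ew: "n = pval p (poly g w) + pval p (poly q w)"
    using fw q pval_mult[OF U gw] by simp
  have dg: "p ^ m dvd (poly g a - poly g w)" using d poly_diff_dvd dvd_trans by blast
  have dq: "p ^ m dvd (poly q a - poly q w)" using d poly_diff_dvd dvd_trans by blast
  have dg': "p ^ m dvd (poly g w - poly g a)" using dg by (metis dvd_minus_iff minus_diff_eq)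
  have dq': "p ^ m dvd (poly q w - poly q a)" using dq by (metis dvd_minus_iff minus_diff_eq)
  have qne: "pval p (poly q a) \<noteq> pval p (poly q w)" using ea ew ne by simp
  have s1: "m \<le> pval p (poly g a)" by (rule pval_close[OF U ga(1) gw(1) dg ne])
  have s2: "m \<le> pval p (poly g w)" by (rule pval_close[OF U gw(1) ga(1) dg']) (use ne in simp)
  have s3: "m \<le> pval p (poly q a)" by (rule pval_close[OF U ga(2) gw(2) dq qne])
  have s4: "m \<le> pval p (poly q w)" by (rule pval_close[OF U gw(2) ga(2) dq']) (use qne in simp)
  show False using ea ew s1 s2 s3 s4 mn ne by linarith
qed

theorem lemma4p4:
  fixes p :: "'a::idom" and f :: "'a poly" and P :: "'a poly set" and W :: "'a set"
  assumes "dvd_uniformizer p"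
    and "finite_residue_field p"
    and "degree f \<ge> 1"
    and "primitive_poly f"
    and "irred_divisor_set f P"
    and "vd p f \<ge> 1"
    and "W \<subseteq> Wset p f"
    and "\<forall>a\<in>Wset p f. \<exists>w\<in>W. p ^ ((vd p f + 1) div 2) dvd (a - w)"
    and "\<forall>w1\<in>W. \<forall>w2\<in>W. p ^ ((vd p f + 1) div 2) dvd (w1 - w2) \<longrightarrow> w1 = w2"
  shows "(\<forall>a\<in>Wset p f. \<exists>w\<in>W. \<forall>g\<in>P.
            pval p (poly g a) = pval p (poly g w))
         \<and> {u :: 'a poly \<Rightarrow> rat. (\<forall>g. g \<notin> P \<longrightarrow> u g = 0) \<and>
              (\<forall>w\<in>W. (\<Sum>g\<in>P. u g * of_nat (pval p (poly g w))) = 0)} = fdk p f P"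
proof -
  have A: "\<forall>a\<in>Wset p f. \<exists>w\<in>W. \<forall>g\<in>P. pval p (poly g a) = pval p (poly g w)"
  proof
    fix a assume a: "a \<in> Wset p f"
    then obtain w where w: "w \<in> W" "p ^ ((vd p f + 1) div 2) dvd (a - w)" using assms(8) by blast
    have wW: "w \<in> Wset p f" using w assms(7) by blast
    have "\<forall>g\<in>P. pval p (poly g a) = pval p (poly g w)"
    proof
      fix g assume "g \<in> P"
      then have "g dvd f" using assms(5) by (auto simp: irred_divisor_set_def)
      show "pval p (poly g a) = pval p (poly g w)"
        by (rule same_val[OF assms(1) \<open>g dvd f\<close> _ _ _ _ w(2)])
           (use a wW in \<open>auto simp: Wset_def\<close>)
    qed
    then show "\<exists>w\<in>W. \<forall>g\<in>P. pval p (poly g a) = pval p (poly g w)" using w by blast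
  qed
  have B: "{u :: 'a poly \<Rightarrow> rat. (\<forall>g. g \<notin> P \<longrightarrow> u g = 0) \<and>
              (\<forall>w\<in>W. (\<Sum>g\<in>P. u g * of_nat (pval p (poly g w))) = 0)} = fdk p f P"
  proof (rule set_eqI, rule iffI)
    fix u assume "u \<in> {u :: 'a poly \<Rightarrow> rat. (\<forall>g. g \<notin> P \<longrightarrow> u g = 0) \<and>
              (\<forall>w\<in>W. (\<Sum>g\<in>P. u g * of_nat (pval p (poly g w))) = 0)}"
    then have u1: "\<forall>g. g \<notin> P \<longrightarrow> u g = 0"
      and u2: "\<forall>w\<in>W. (\<Sum>g\<in>P. u g * of_nat (pval p (poly g w))) = 0" by auto
    have "\<forall>a\<in>Wset p f. (\<Sum>g\<in>P. u g * of_nat (pval p (poly g a))) = 0"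
    proof
      fix a assume "a \<in> Wset p f"
      then obtain w where w: "w \<in> W" "\<forall>g\<in>P. pval p (poly g a) = pval p (poly g w)"
        using A by blast
      have "(\<Sum>g\<in>P. u g * of_nat (pval p (poly g a))) = (\<Sum>g\<in>P. u g * of_nat (pval p (poly g w)))"
        using w(2) by (intro sum.cong) auto
      then show "(\<Sum>g\<in>P. u g * of_nat (pval p (poly g a))) = 0" using u2 w(1) by simp
    qed
    then show "u \<in> fdk p f P" using u1 by (simp add: fdk_def)
  next
    fix u assume "u \<in> fdk p f P"
    then show "u \<in> {u :: 'a poly \<Rightarrow> rat. (\<forall>g. g \<notin> P \<longrightarrow> u g = 0) \<and>
              (\<forall>w\<in>W. (\<Sum>g\<in>P. u g * of_nat (pval p (poly g w))) = 0)}"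
      using assms(7) by (auto simp: fdk_def)
  qed
  show ?thesis using A B by blast
qed

end
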